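(* Let $\alpha\in(1,2)$ and $\beta>0$. Then there is a constant $c\ge1$ depending only on $\alpha$ and $\beta$ such that for all $v\in(0,1)$, $$c^{-1}v^{-\beta}(1-v)^{1-2/\alpha}\le\int_v^1 r^{-\beta}(1-r^\alpha)^{-1/\alpha}(r^\alpha-v^\alpha)^{-1/\alpha}\,dr\le c\,v^{-\beta}(1-v)^{1-2/\alpha}.$$ *)

theory Defs
  imports "HOL-Analysis.Analysis"
begin

end

theory Submission
  imports Defs
begin


lemma cmp_upper:
  fixes f g :: "real \<Rightarrow> real"
  assumes "a \<le> b" "continuous_on {a<..<b} f" "(g has_integral G) {a..b}"
    "\<And>x. x \<in> {a<..<b} \<Longrightarrow> 0 \<le> f x \<and> f x \<le> g x"
  shows "f integrable_on {a..b} \<and> integral {a..b} f \<le> G"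
proof -
  have gi: "g integrable_on {a<..<b}"
    using assms(3) integrable_on_open_interval_real by blast
  have fi: "f integrable_on {a<..<b}"
    by (rule measurable_bounded_by_integrable_imp_integrable_real[OF
          continuous_imp_measurable_on_sets_lebesgue[OF assms(2)] gi])
       (use assms(4) in auto)
  have "integral {a<..<b} f \<le> integral {a<..<b} g"
    by (rule integral_le[OF fi gi]) (use assms(4) in auto)
  moreover have "integral {a<..<b} g = G"
    using assms(3) integral_open_interval_real integral_unique by metis
  ultimately show ?thesis
    using fi integrable_on_open_interval_real integral_open_interval_real by metis
qed

lemma cmp_lower:
  fixes f h :: "real \<Rightarrow> real"
  assumes "f integrable_on {a..b}" "(h has_integral H) {a..b}"
    "\<And>x. x \<in> {a<..<b} \<Longrightarrow> h x \<le> f x"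
  shows "H \<le> integral {a..b} f"
proof -
  have hi: "h integrable_on {a<..<b}"
    using assms(2) integrable_on_open_interval_real by blast
  have fi: "f integrable_on {a<..<b}"
    using assms(1) integrable_on_open_interval_real by blast
  have "integral {a<..<b} h \<le> integral {a<..<b} f"
    by (rule integral_le[OF hi fi]) (use assms(3) in auto)
  moreover have "integral {a<..<b} h = H"
    using assms(2) integral_open_interval_real integral_unique by metis
  ultimately show ?thesis
    using integral_open_interval_real by metis
qed

lemma int_left:
  fixes a b q :: real
  assumes "a \<le> b" "0 < q" "q < 1"
  shows "((\<lambda>r. (r - a) powr (-q)) has_integral (b-a) powr (1-q)/(1-q)) {a..b}"
proof -
  have "((\<lambda>r. (r - a) powr (-q)) has_integral ((\<lambda>r. (r-a) powr (1-q)/(1-q)) b - (\<lambda>r. (r-a) powr (1-q)/(1-q)) a)) {a..b}"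
  proof (rule fundamental_theorem_of_calculus_interior[OF assms(1)])
    show "continuous_on {a..b} (\<lambda>r. (r - a) powr (1 - q) / (1 - q))"
      using assms by (intro continuous_intros continuous_on_powr') auto
    fix x assume x: "x \<in> {a<..<b}"
    show "((\<lambda>r. (r - a) powr (1 - q) / (1 - q)) has_vector_derivative (x - a) powr - q) (at x)"
    proof -
      have "((\<lambda>r. (r - a) powr (1 - q)) has_real_derivative (1-q) * (x-a) powr (1-q-1) * 1) (at x)"
        using DERIV_fun_powr[of "\<lambda>r. r - a" 1 x "1-q"] x by (auto intro!: derivative_eq_intros)
      then have "((\<lambda>r. (r - a) powr (1 - q) / (1-q)) has_real_derivative (1-q) * (x-a) powr (1-q-1) * 1 / (1-q)) (at x)"
        by (rule DERIV_cdivide)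
      then show ?thesis using assms by (simp add: has_real_derivative_iff_has_vector_derivative)
    qed
  qed
  then show ?thesis using assms by simp
qed

lemma int_right:
  fixes a b q :: real
  assumes "a \<le> b" "0 < q" "q < 1"
  shows "((\<lambda>r. (b - r) powr (-q)) has_integral (b-a) powr (1-q)/(1-q)) {a..b}"
proof -
  have "((\<lambda>r. (b - r) powr (-q)) has_integral ((\<lambda>r. -((b-r) powr (1-q)/(1-q))) b - (\<lambda>r. -((b-r) powr (1-q)/(1-q))) a)) {a..b}"
  proof (rule fundamental_theorem_of_calculus_interior[OF assms(1)])
    show "continuous_on {a..b} (\<lambda>r. -((b - r) powr (1 - q) / (1 - q)))"
      using assms by (intro continuous_intros continuous_on_powr') auto
    fix x assume x: "x \<in> {a<..<b}"
    show "((\<lambda>r. -((b - r) powr (1 - q) / (1 - q))) has_vector_derivative (b - x) powr - q) (at x)"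
    proof -
      have "((\<lambda>r. (b - r) powr (1 - q)) has_real_derivative (1-q) * (b-x) powr (1-q-1) * (-1)) (at x)"
        using DERIV_fun_powr[of "\<lambda>r. b - r" "-1" x "1-q"] x by (auto intro!: derivative_eq_intros)
      then have "((\<lambda>r. -((b - r) powr (1 - q) / (1-q))) has_real_derivative -((1-q) * (b-x) powr (1-q-1) * (-1) / (1-q))) (at x)"
        by (intro DERIV_minus DERIV_cdivide)
      then show ?thesis using assms by (simp add: has_real_derivative_iff_has_vector_derivative)
    qed
  qed
  then show ?thesis using assms by simp
qed

lemma int_inv:
  fixes a b \<beta> :: real
  assumes "0 < a" "a \<le> b" "0 < \<beta>"
  shows "((\<lambda>r. r powr (-\<beta>-1)) has_integral (a powr (-\<beta>) - b powr (-\<beta>))/\<beta>) {a..b}"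
proof -
  have "((\<lambda>r. r powr (-\<beta>-1)) has_integral ((\<lambda>r. -(r powr (-\<beta>)/\<beta>)) b - (\<lambda>r. -(r powr (-\<beta>)/\<beta>)) a)) {a..b}"
  proof (rule fundamental_theorem_of_calculus_interior[OF assms(2)])
    show "continuous_on {a..b} (\<lambda>r. -(r powr (-\<beta>)/\<beta>))"
      using assms by (intro continuous_intros) auto
    fix x assume x: "x \<in> {a<..<b}"
    show "((\<lambda>r. -(r powr (-\<beta>)/\<beta>)) has_vector_derivative x powr (-\<beta>-1)) (at x)"
      unfolding has_real_derivative_iff_has_vector_derivative[symmetric]
      using x assms
      by (auto intro!: derivative_eq_intros simp: powr_diff field_simps powr_minus)
  qed
  then show ?thesis using assms by (simp add: field_simps)
qed



lemma K1:
  fixes \<alpha> v r :: real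
  assumes "1 \<le> \<alpha>" "0 < v" "v \<le> r"
  shows "r powr (\<alpha>-1) * (r-v) \<le> r powr \<alpha> - v powr \<alpha>"
proof -
  have "v powr \<alpha> = v powr (\<alpha>-1) * v" using assms by (simp add: powr_diff)
  moreover have "r powr \<alpha> = r powr (\<alpha>-1) * r" using assms by (simp add: powr_diff)
  moreover have "v powr (\<alpha>-1) \<le> r powr (\<alpha>-1)" using assms by (intro powr_mono2) auto
  ultimately show ?thesis using assms by (simp add: algebra_simps mult_right_mono)
qed

lemma K2:
  fixes \<alpha> v r :: real
  assumes "1 \<le> \<alpha>" "\<alpha> \<le> 2" "0 < v" "v \<le> r" "r \<le> 1"
  shows "r powr \<alpha> - v powr \<alpha> \<le> 2 * (r-v)"
proof -
  have r0: "0 < r" using assms by simp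
  have e1: "v powr \<alpha> = r powr \<alpha> * (v/r) powr \<alpha>" using assms r0
    by (simp add: powr_divide)
  have e2: "(v/r) powr 2 \<le> (v/r) powr \<alpha>"
    using assms r0 by (intro powr_mono') auto
  have e3: "(v/r) powr 2 = (v/r)^2" using assms r0 by (simp add: powr_numeral)
  have e4: "r powr \<alpha> \<le> r" using powr_mono'[of 1 \<alpha> r] assms r0 by simp
  have "r powr \<alpha> - v powr \<alpha> \<le> r powr \<alpha> * (1 - (v/r)^2)"
    using e1 e2 e3 by (simp add: algebra_simps mult_left_mono)
  also have "1 - (v/r)^2 = (r - v) * (r + v) / r^2" using r0 by (simp add: field_simps power2_eq_square)
  also have "r powr \<alpha> * ((r - v) * (r + v) / r^2) \<le> r * ((r - v) * (r + v) / r^2)"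
    using e4 assms by (intro mult_right_mono) auto
  also have "r * ((r - v) * (r + v) / r^2) = (r - v) * ((r + v) / r)" using r0 by (simp add: field_simps power2_eq_square)
  also have "\<dots> \<le> (r - v) * 2" using assms r0 by (intro mult_left_mono) (auto simp: field_simps)
  finally show ?thesis by simp
qed



definition FF :: "real \<Rightarrow> real \<Rightarrow> real \<Rightarrow> real \<Rightarrow> real" where
  "FF \<alpha> \<beta> v = (\<lambda>r. r powr (-\<beta>) * (1 - r powr \<alpha>) powr (-1/\<alpha>) * (r powr \<alpha> - v powr \<alpha>) powr (-1/\<alpha>))"

lemma FF_cont:
  assumes "1 < \<alpha>" "0 < v" "v \<le> a" "b \<le> 1"
  shows "continuous_on {a<..<b} (FF \<alpha> \<beta> v)"
proof -
  have h: "x \<noteq> 0 \<and> 1 - x powr \<alpha> \<noteq> 0 \<and> x powr \<alpha> - v powr \<alpha> \<noteq> 0" if x: "x \<in> {a<..<b}" for x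
  proof -
    have x0: "0 < x" "v < x" "x < 1" using assms x by auto
    have "x powr \<alpha> < 1" using x0 powr_less_mono2[of \<alpha> x 1] assms by simp
    moreover have "v powr \<alpha> < x powr \<alpha>" using x0 assms by (simp add: powr_less_mono2)
    ultimately show ?thesis using x0 assms by simp
  qed
  have "continuous_on {a<..<b} (\<lambda>r. r powr (-\<beta>) * (1 - r powr \<alpha>) powr (-1/\<alpha>) * (r powr \<alpha> - v powr \<alpha>) powr (-1/\<alpha>))"
    by (intro continuous_intros) (auto dest: h)
  then show ?thesis unfolding FF_def .
qed

lemma FF_nonneg: "0 \<le> FF \<alpha> \<beta> v r" unfolding FF_def by simp

lemma negpow:
  fixes x y e :: real
  assumes "e \<le> 0" "0 < x" "x \<le> y"
  shows "y powr e \<le> x powr e"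
  using powr_mono2'[OF assms] .



lemma mult3_mono:
  fixes x y z x' y' z' :: real
  assumes "0 \<le> x" "x \<le> x'" "0 \<le> y" "y \<le> y'" "0 \<le> z" "z \<le> z'"
  shows "x * y * z \<le> x' * y' * z'"
  using assms by (meson mult_mono order_trans mult_nonneg_nonneg)

lemma caseA:
  fixes \<alpha> \<beta> v :: real
  assumes a: "1 < \<alpha>" "\<alpha> < 2" "0 < \<beta>" and v: "1/4 \<le> v" "v < 1"
  defines "q \<equiv> 1/\<alpha>"
  shows "FF \<alpha> \<beta> v integrable_on {v..1} \<and>
    2 powr (-q) * 2 powr (-q) / (1-q) * (1/4) powr \<beta> * v powr (-\<beta>) * (1 - v) powr (1 - 2/\<alpha>) \<le> integral {v..1} (FF \<alpha> \<beta> v) \<and>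
    integral {v..1} (FF \<alpha> \<beta> v) \<le> 2 * (1/4) powr (-\<beta>) * (1/4) powr (-q) * (1/2) powr (1-2*q) / (1-q) * v powr (-\<beta>) * (1 - v) powr (1 - 2/\<alpha>)"
proof -
  have q: "0 < q" "q < 1" "-1/\<alpha> = -q" using a by (auto simp: q_def field_simps)
  define h where "h = (1-v)/2"
  define m where "m = (1+v)/2"
  have h0: "0 < h" using v by (simp add: h_def)
  define KA where "KA = (1/4) powr (-\<beta>) * h powr (-q) * (1/4) powr (-q)"
  have KA0: "0 \<le> KA" by (simp add: KA_def)
  have vm: "v \<le> m" "m \<le> 1" "m - v = h" "1 - m = h" using v by (auto simp: m_def h_def field_simps)
  have A_ge: "1 - r \<le> 1 - r powr \<alpha>" if "0 < r" "r \<le> 1" for r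
    using K1[of \<alpha> r 1] a that by simp
  have B_ge: "(1/4) * (r - v) \<le> r powr \<alpha> - v powr \<alpha>" if "v \<le> r" "r \<le> 1" for r
  proof -
    have "r powr 1 \<le> r powr (\<alpha>-1)" using powr_mono'[of "\<alpha>-1" 1 r] a v that by simp
    then have "1/4 \<le> r powr (\<alpha>-1)" using v that by simp
    then have "(1/4) * (r - v) \<le> r powr (\<alpha>-1) * (r-v)" using that by (intro mult_right_mono) auto
    also have "\<dots> \<le> r powr \<alpha> - v powr \<alpha>" using K1[of \<alpha> v r] a v that by simp
    finally show ?thesis .
  qed
  have X_le: "r powr (-\<beta>) \<le> (1/4) powr (-\<beta>)" if "v \<le> r" for r
    using negpow[of "-\<beta>" "1/4" r] a v that by simp
  have I1: "((\<lambda>r. KA * (r - v) powr (-q)) has_integral KA * (h powr (1-q)/(1-q))) {v..m}"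
    using has_integral_mult_right[OF int_left[of v m q]] vm q by simp
  have I2: "((\<lambda>r. KA * (1 - r) powr (-q)) has_integral KA * (h powr (1-q)/(1-q))) {m..1}"
    using has_integral_mult_right[OF int_right[of m 1 q]] vm q by simp
  have U1: "FF \<alpha> \<beta> v integrable_on {v..m} \<and> integral {v..m} (FF \<alpha> \<beta> v) \<le> KA * (h powr (1-q)/(1-q))"
  proof (rule cmp_upper[OF vm(1) FF_cont I1])
    fix r assume r: "r \<in> {v<..<m}"
    have r1: "v < r" "r < 1" "1 - r \<ge> h" using r vm v by (auto simp: m_def h_def)
    have "FF \<alpha> \<beta> v r = r powr (-\<beta>) * (1 - r powr \<alpha>) powr (-q) * (r powr \<alpha> - v powr \<alpha>) powr (-q)"
      unfolding FF_def using q by simp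
    also have "\<dots> \<le> (1/4) powr (-\<beta>) * h powr (-q) * ((1/4) * (r - v)) powr (-q)"
    proof (rule mult3_mono)
      show "r powr (-\<beta>) \<le> (1/4) powr (-\<beta>)" using X_le r1 by simp
      show "(1 - r powr \<alpha>) powr (-q) \<le> h powr (-q)"
        using negpow[of "-q" h "1 - r powr \<alpha>"] A_ge[of r] h0 r1 v q by simp
      show "(r powr \<alpha> - v powr \<alpha>) powr (-q) \<le> ((1/4) * (r - v)) powr (-q)"
        using negpow[of "-q" "(1/4) * (r - v)" "r powr \<alpha> - v powr \<alpha>"] B_ge[of r] r1 q by simp
    qed auto
    also have "\<dots> = KA * (r - v) powr (-q)" using r1 powr_mult[of "1/4" "r-v" "-q"] by (simp add: KA_def)
    finally show "0 \<le> FF \<alpha> \<beta> v r \<and> FF \<alpha> \<beta> v r \<le> KA * (r - v) powr (-q)"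
      using FF_nonneg by simp
  qed (use a v vm in auto)
  have U2: "FF \<alpha> \<beta> v integrable_on {m..1} \<and> integral {m..1} (FF \<alpha> \<beta> v) \<le> KA * (h powr (1-q)/(1-q))"
  proof (rule cmp_upper[OF vm(2) FF_cont I2])
    fix r assume r: "r \<in> {m<..<1}"
    have r1: "v < r" "r < 1" "r - v \<ge> h" using r vm v by (auto simp: m_def h_def)
    have "FF \<alpha> \<beta> v r = r powr (-\<beta>) * (1 - r powr \<alpha>) powr (-q) * (r powr \<alpha> - v powr \<alpha>) powr (-q)"
      unfolding FF_def using q by simp
    also have "\<dots> \<le> (1/4) powr (-\<beta>) * (1 - r) powr (-q) * ((1/4) * h) powr (-q)"
    proof (rule mult3_mono)
      show "r powr (-\<beta>) \<le> (1/4) powr (-\<beta>)" using X_le r1 by simp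
      show "(1 - r powr \<alpha>) powr (-q) \<le> (1 - r) powr (-q)"
        using negpow[of "-q" "1 - r" "1 - r powr \<alpha>"] A_ge[of r] h0 r1 v q by simp
      have "(1/4) * h \<le> (1/4) * (r - v)" using r1 by simp
      then show "(r powr \<alpha> - v powr \<alpha>) powr (-q) \<le> ((1/4) * h) powr (-q)"
        using negpow[of "-q" "(1/4) * h" "r powr \<alpha> - v powr \<alpha>"] B_ge[of r] r1 q h0 by simp
    qed auto
    also have "\<dots> = KA * (1 - r) powr (-q)" using r1 h0 powr_mult[of "1/4" "h" "-q"] by (simp add: KA_def)
    finally show "0 \<le> FF \<alpha> \<beta> v r \<and> FF \<alpha> \<beta> v r \<le> KA * (1 - r) powr (-q)"
      using FF_nonneg by simp
  qed (use a v vm in auto)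
  have integ: "FF \<alpha> \<beta> v integrable_on {v..1}"
    using Henstock_Kurzweil_Integration.integrable_combine[where a=v and c=m and b=1] U1 U2 vm by auto
  have spl: "integral {v..1} (FF \<alpha> \<beta> v) = integral {v..m} (FF \<alpha> \<beta> v) + integral {m..1} (FF \<alpha> \<beta> v)"
    using Henstock_Kurzweil_Integration.integral_combine[where a=v and c=m and b=1, OF _ _ integ] vm by simp
  have hpow: "h powr (-q) * h powr (1-q) = (1 - v) powr (1 - 2/\<alpha>) * (1/2) powr (1-2*q)"
  proof -
    have "h powr (-q) * h powr (1-q) = h powr (1 - 2*q)" by (simp add: powr_add[symmetric])
    also have "\<dots> = (1 - v) powr (1 - 2*q) * (1/2) powr (1-2*q)"
      unfolding h_def using powr_mult[of "1-v" "1/2" "1-2*q"] v by simp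
    finally show ?thesis by (simp add: q_def)
  qed
  have vb: "1 \<le> v powr (-\<beta>)" using negpow[of "-\<beta>" v 1] a v by simp
  have upper: "integral {v..1} (FF \<alpha> \<beta> v) \<le> 2 * (1/4) powr (-\<beta>) * (1/4) powr (-q) * (1/2) powr (1-2*q) / (1-q) * v powr (-\<beta>) * (1 - v) powr (1 - 2/\<alpha>)"
  proof -
    have "integral {v..1} (FF \<alpha> \<beta> v) \<le> 2 * (KA * (h powr (1-q)/(1-q)))"
      using spl U1 U2 by simp
    also have "\<dots> = 2 * (1/4) powr (-\<beta>) * (1/4) powr (-q) * (1/2) powr (1-2*q) / (1-q) * (1 - v) powr (1 - 2/\<alpha>)"
      unfolding KA_def using hpow by (simp add: field_simps)
    also have "\<dots> \<le> 2 * (1/4) powr (-\<beta>) * (1/4) powr (-q) * (1/2) powr (1-2*q) / (1-q) * v powr (-\<beta>) * (1 - v) powr (1 - 2/\<alpha>)"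
    proof -
      have "0 \<le> 2 * (1/4) powr (-\<beta>) * (1/4) powr (-q) * (1/2) powr (1-2*q) / (1-q) * (1 - v) powr (1 - 2/\<alpha>)"
        using q by simp
      from mult_left_mono[OF vb this] show ?thesis by (simp add: algebra_simps)
    qed
    finally show ?thesis .
  qed
  have IL: "((\<lambda>r. (2 * (1 - v)) powr (-q) * 2 powr (-q) * (r - v) powr (-q)) has_integral
      (2 * (1 - v)) powr (-q) * 2 powr (-q) * ((1 - v) powr (1-q)/(1-q))) {v..1}"
    using has_integral_mult_right[OF int_left[of v 1 q]] v q by simp
  have low0: "(2 * (1 - v)) powr (-q) * 2 powr (-q) * ((1 - v) powr (1-q)/(1-q)) \<le> integral {v..1} (FF \<alpha> \<beta> v)"
  proof (rule cmp_lower[OF integ IL])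
    fix r assume r: "r \<in> {v<..<1}"
    have r1: "v < r" "r < 1" "0 < r" using r v by auto
    have Bpos: "0 < r powr \<alpha> - v powr \<alpha>" using r1 v a by (simp add: powr_less_mono2)
    have Apos: "0 < 1 - r powr \<alpha>" using r1 powr_less_mono2[of \<alpha> r 1] a by simp
    have "(2 * (1 - v)) powr (-q) * 2 powr (-q) * (r - v) powr (-q) = 1 * (2 * (1 - v)) powr (-q) * (2 * (r - v)) powr (-q)"
      using r1 powr_mult[of 2 "r-v" "-q"] by simp
    also have "\<dots> \<le> r powr (-\<beta>) * (1 - r powr \<alpha>) powr (-q) * (r powr \<alpha> - v powr \<alpha>) powr (-q)"
    proof (rule mult3_mono)
      show "1 \<le> r powr (-\<beta>)" using negpow[of "-\<beta>" r 1] a r1 by simp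
      have "1 - r powr \<alpha> \<le> 2 * (1 - r)" using K2[of \<alpha> r 1] a r1 by simp
      also have "\<dots> \<le> 2 * (1 - v)" using r1 by simp
      finally show "(2 * (1 - v)) powr (-q) \<le> (1 - r powr \<alpha>) powr (-q)"
        using negpow[of "-q" "1 - r powr \<alpha>" "2 * (1 - v)"] Apos q by simp
      show "(2 * (r - v)) powr (-q) \<le> (r powr \<alpha> - v powr \<alpha>) powr (-q)"
        using negpow[of "-q" "r powr \<alpha> - v powr \<alpha>" "2 * (r - v)"] K2[of \<alpha> v r] Bpos q a v r1 by simp
    qed auto
    also have "\<dots> = FF \<alpha> \<beta> v r" unfolding FF_def using q by simp
    finally show "(2 * (1 - v)) powr (-q) * 2 powr (-q) * (r - v) powr (-q) \<le> FF \<alpha> \<beta> v r" .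
  qed
  have lower: "2 powr (-q) * 2 powr (-q) / (1-q) * (1/4) powr \<beta> * v powr (-\<beta>) * (1 - v) powr (1 - 2/\<alpha>) \<le> integral {v..1} (FF \<alpha> \<beta> v)"
  proof -
    have e: "(2 * (1 - v)) powr (-q) * 2 powr (-q) * ((1 - v) powr (1-q)/(1-q)) = 2 powr (-q) * 2 powr (-q) / (1-q) * (1 - v) powr (1 - 2/\<alpha>)"
    proof -
      have "(1 - v) powr (-q) * (1 - v) powr (1-q) = (1 - v) powr (1 - 2/\<alpha>)"
        by (simp add: powr_add[symmetric] q_def)
      then show ?thesis using powr_mult[of 2 "1-v" "-q"] v by (simp add: field_simps)
    qed
    have "(1/4) powr \<beta> * v powr (-\<beta>) \<le> (1/4) powr \<beta> * (1/4) powr (-\<beta>)"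
      using negpow[of "-\<beta>" "1/4" v] a v by (intro mult_left_mono) auto
    also have "\<dots> = 1" by (simp add: powr_add[symmetric])
    finally have "(1/4) powr \<beta> * v powr (-\<beta>) \<le> 1" .
    moreover have "0 \<le> 2 powr (-q) * 2 powr (-q) / (1-q) * (1 - v) powr (1 - 2/\<alpha>)" using q by simp
    ultimately have "2 powr (-q) * 2 powr (-q) / (1-q) * (1 - v) powr (1 - 2/\<alpha>) * ((1/4) powr \<beta> * v powr (-\<beta>))
        \<le> 2 powr (-q) * 2 powr (-q) / (1-q) * (1 - v) powr (1 - 2/\<alpha>)"
      using mult_left_le by blast
    moreover have "2 powr (-q) * 2 powr (-q) / (1-q) * (1 - v) powr (1 - 2/\<alpha>) \<le> integral {v..1} (FF \<alpha> \<beta> v)"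
      using low0[unfolded e] .
    ultimately show ?thesis by (simp add: algebra_simps)
  qed
  show ?thesis using integ lower upper by blast
qed


lemma caseB:
  fixes \<alpha> \<beta> v :: real
  assumes a: "1 < \<alpha>" "\<alpha> < 2" "0 < \<beta>" and v: "0 < v" "v < 1/4"
  defines "q \<equiv> 1/\<alpha>"
  shows "FF \<alpha> \<beta> v integrable_on {v..1} \<and>
    (1 - (1/4) powr \<beta>) / (2*\<beta>) * v powr (-\<beta>) * (1 - v) powr (1 - 2/\<alpha>) \<le> integral {v..1} (FF \<alpha> \<beta> v) \<and>
    integral {v..1} (FF \<alpha> \<beta> v) \<le> ((1/2) powr (-q) / (1-q) + (1/2) powr (-q) * (1/2) powr (-q) / \<beta>
       + (1/2) powr (-\<beta>) * (1/8) powr (-q) * ((1/2) powr (1-q) / (1-q))) * v powr (-\<beta>) * (1 - v) powr (1 - 2/\<alpha>)"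
proof -
  have q: "0 < q" "q < 1" "-1/\<alpha> = -q" "\<alpha> * q = 1" using a by (auto simp: q_def field_simps)
  have A_ge: "1 - r \<le> 1 - r powr \<alpha>" if "0 < r" "r \<le> 1" for r
    using K1[of \<alpha> r 1] a that by simp
  have Apos: "0 < 1 - r powr \<alpha>" if "0 < r" "r < 1" for r
    using that powr_less_mono2[of \<alpha> r 1] a by simp
  have Bpos: "0 < r powr \<alpha> - v powr \<alpha>" if "v < r" for r
    using that v a by (simp add: powr_less_mono2)
  define KB1 where "KB1 = v powr (-\<beta>) * (1/2) powr (-q) * (v powr (\<alpha>-1)) powr (-q)"
  define KB2 where "KB2 = (1/2) powr (-q) * (1/2) powr (-q)"
  define KB3 where "KB3 = (1/2) powr (-\<beta>) * (1/8) powr (-q)"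
  have I1: "((\<lambda>r. KB1 * (r - v) powr (-q)) has_integral KB1 * (v powr (1-q)/(1-q))) {v..(2 * v)}"
    using has_integral_mult_right[OF int_left[of v "2 * v" q]] v q by simp
  have I2: "((\<lambda>r. KB2 * r powr (-\<beta>-1)) has_integral KB2 * (((2 * v) powr (-\<beta>) - (1/2) powr (-\<beta>))/\<beta>)) {(2 * v)..(1/2)}"
    using has_integral_mult_right[OF int_inv[of "2 * v" "1/2" \<beta>]] v a by simp
  have I3: "((\<lambda>r. KB3 * (1 - r) powr (-q)) has_integral KB3 * ((1/2) powr (1-q)/(1-q))) {(1/2)..1}"
    using has_integral_mult_right[OF int_right[of "1/2" 1 q]] q by simp
  have U1: "FF \<alpha> \<beta> v integrable_on {v..(2 * v)} \<and> integral {v..(2 * v)} (FF \<alpha> \<beta> v) \<le> KB1 * (v powr (1-q)/(1-q))"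
  proof (rule cmp_upper[OF _ FF_cont I1])
    fix r assume r: "r \<in> {v<..<(2 * v)}"
    have r1: "v < r" "r < 1/2" "0 < r" using r v by auto
    have "FF \<alpha> \<beta> v r = r powr (-\<beta>) * (1 - r powr \<alpha>) powr (-q) * (r powr \<alpha> - v powr \<alpha>) powr (-q)"
      unfolding FF_def using q by simp
    also have "\<dots> \<le> v powr (-\<beta>) * (1/2) powr (-q) * (v powr (\<alpha>-1) * (r - v)) powr (-q)"
    proof (rule mult3_mono)
      show "r powr (-\<beta>) \<le> v powr (-\<beta>)" using negpow[of "-\<beta>" v r] a v r1 by simp
      show "(1 - r powr \<alpha>) powr (-q) \<le> (1/2) powr (-q)"
        using negpow[of "-q" "1/2" "1 - r powr \<alpha>"] A_ge[of r] r1 q by simp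
      have "v powr (\<alpha>-1) \<le> r powr (\<alpha>-1)" using a r1 v by (intro powr_mono2) auto
      then have "v powr (\<alpha>-1) * (r - v) \<le> r powr (\<alpha>-1) * (r - v)" using r1 by (intro mult_right_mono) auto
      also have "\<dots> \<le> r powr \<alpha> - v powr \<alpha>" using K1[of \<alpha> v r] a v r1 by simp
      finally show "(r powr \<alpha> - v powr \<alpha>) powr (-q) \<le> (v powr (\<alpha>-1) * (r - v)) powr (-q)"
        using negpow[of "-q" "v powr (\<alpha>-1) * (r - v)" "r powr \<alpha> - v powr \<alpha>"] r1 q v by simp
    qed auto
    also have "\<dots> = KB1 * (r - v) powr (-q)" using r1 powr_mult[of "v powr (\<alpha>-1)" "r-v" "-q"] by (simp add: KB1_def)
    finally show "0 \<le> FF \<alpha> \<beta> v r \<and> FF \<alpha> \<beta> v r \<le> KB1 * (r - v) powr (-q)"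
      using FF_nonneg by simp
  qed (use a v in auto)
  have U2: "FF \<alpha> \<beta> v integrable_on {(2 * v)..(1/2)} \<and> integral {(2 * v)..(1/2)} (FF \<alpha> \<beta> v) \<le> KB2 * (((2 * v) powr (-\<beta>) - (1/2) powr (-\<beta>))/\<beta>)"
  proof (rule cmp_upper[OF _ FF_cont I2])
    fix r assume r: "r \<in> {(2 * v)<..<(1/2)}"
    have r1: "v < r" "r < 1/2" "0 < r" "v \<le> r/2" using r v by auto
    have "FF \<alpha> \<beta> v r = r powr (-\<beta>) * (1 - r powr \<alpha>) powr (-q) * (r powr \<alpha> - v powr \<alpha>) powr (-q)"
      unfolding FF_def using q by simp
    also have "\<dots> \<le> r powr (-\<beta>) * (1/2) powr (-q) * (r powr \<alpha> * (1/2)) powr (-q)"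
    proof (rule mult3_mono)
      show "(1 - r powr \<alpha>) powr (-q) \<le> (1/2) powr (-q)"
        using negpow[of "-q" "1/2" "1 - r powr \<alpha>"] A_ge[of r] r1 q by simp
      have "v powr \<alpha> \<le> (r/2) powr \<alpha>" using r1 v a by (intro powr_mono2) auto
      also have "\<dots> = r powr \<alpha> * (1/2) powr \<alpha>" using r1 by (simp add: powr_divide)
      also have "\<dots> \<le> r powr \<alpha> * (1/2) powr 1" using powr_mono'[of 1 \<alpha> "1/2"] a by (intro mult_left_mono) auto
      finally have "r powr \<alpha> * (1/2) \<le> r powr \<alpha> - v powr \<alpha>" by simp
      then show "(r powr \<alpha> - v powr \<alpha>) powr (-q) \<le> (r powr \<alpha> * (1/2)) powr (-q)"
        using negpow[of "-q" "r powr \<alpha> * (1/2)" "r powr \<alpha> - v powr \<alpha>"] r1 q by simp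
    qed auto
    also have "\<dots> = KB2 * r powr (-\<beta>-1)"
    proof -
      have "(r powr \<alpha> * (1/2)) powr (-q) = (r powr \<alpha>) powr (-q) * (1/2) powr (-q)"
        by (rule powr_mult)
      also have "(r powr \<alpha>) powr (-q) = r powr (-1)" using q by (simp add: powr_powr)
      finally have e: "(r powr \<alpha> * (1/2)) powr (-q) = r powr (-1) * (1/2) powr (-q)" .
      have "r powr (-\<beta>-1) = r powr (-\<beta>) * r powr (-1)" using powr_add[of r "-\<beta>" "-1"] by simp
      then show ?thesis unfolding e KB2_def by simp
    qed
    finally show "0 \<le> FF \<alpha> \<beta> v r \<and> FF \<alpha> \<beta> v r \<le> KB2 * r powr (-\<beta>-1)"
      using FF_nonneg by simp
  qed (use a v in auto)
  have U3: "FF \<alpha> \<beta> v integrable_on {(1/2)..1} \<and> integral {(1/2)..1} (FF \<alpha> \<beta> v) \<le> KB3 * ((1/2) powr (1-q)/(1-q))"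
  proof (rule cmp_upper[OF _ FF_cont I3])
    fix r :: real assume r: "r \<in> {(1/2)<..<1}"
    have r1: "v < r" "r < 1" "0 < r" "1/2 < r" using r v by auto
    have "FF \<alpha> \<beta> v r = r powr (-\<beta>) * (1 - r powr \<alpha>) powr (-q) * (r powr \<alpha> - v powr \<alpha>) powr (-q)"
      unfolding FF_def using q by simp
    also have "\<dots> \<le> (1/2) powr (-\<beta>) * (1 - r) powr (-q) * (1/8) powr (-q)"
    proof (rule mult3_mono)
      show "r powr (-\<beta>) \<le> (1/2) powr (-\<beta>)" using negpow[of "-\<beta>" "1/2" r] a r1 by simp
      show "(1 - r powr \<alpha>) powr (-q) \<le> (1 - r) powr (-q)"
        using negpow[of "-q" "1 - r" "1 - r powr \<alpha>"] A_ge[of r] r1 q by simp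
      have "r powr 1 \<le> r powr (\<alpha>-1)" using powr_mono'[of "\<alpha>-1" 1 r] a r1 by simp
      then have "1/2 \<le> r powr (\<alpha>-1)" using r1 by simp
      moreover have "1/4 \<le> r - v" using r1 v by simp
      ultimately have "(1/2) * (1/4) \<le> r powr (\<alpha>-1) * (r - v)" by (intro mult_mono) auto
      also have "\<dots> \<le> r powr \<alpha> - v powr \<alpha>" using K1[of \<alpha> v r] a v r1 by simp
      finally show "(r powr \<alpha> - v powr \<alpha>) powr (-q) \<le> (1/8) powr (-q)"
        using negpow[of "-q" "1/8" "r powr \<alpha> - v powr \<alpha>"] q by simp
    qed auto
    also have "\<dots> = KB3 * (1 - r) powr (-q)" by (simp add: KB3_def)
    finally show "0 \<le> FF \<alpha> \<beta> v r \<and> FF \<alpha> \<beta> v r \<le> KB3 * (1 - r) powr (-q)"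
      using FF_nonneg by simp
  qed (use a v in auto)
  have integ2: "FF \<alpha> \<beta> v integrable_on {v..(1/2)}"
    using Henstock_Kurzweil_Integration.integrable_combine[where a=v and c="2 * v" and b="1/2"] U1 U2 v by auto
  have integ: "FF \<alpha> \<beta> v integrable_on {v..1}"
    using Henstock_Kurzweil_Integration.integrable_combine[where a=v and c="1/2" and b=1] integ2 U3 v by auto
  have spl2: "integral {v..(1/2)} (FF \<alpha> \<beta> v) = integral {v..(2 * v)} (FF \<alpha> \<beta> v) + integral {(2 * v)..(1/2)} (FF \<alpha> \<beta> v)"
    using Henstock_Kurzweil_Integration.integral_combine[where a=v and c="2 * v" and b="1/2", OF _ _ integ2] v by simp
  have spl: "integral {v..1} (FF \<alpha> \<beta> v) = integral {v..(1/2)} (FF \<alpha> \<beta> v) + integral {(1/2)..1} (FF \<alpha> \<beta> v)"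
    using Henstock_Kurzweil_Integration.integral_combine[where a=v and c="1/2" and b=1, OF _ _ integ] v by simp
  have vb: "1 \<le> v powr (-\<beta>)" using negpow[of "-\<beta>" v 1] a v by simp
  have X1: "1 \<le> (1 - v) powr (1 - 2/\<alpha>)"
    using powr_mono'[of "1 - 2/\<alpha>" 0 "1 - v"] a v by (simp add: field_simps)
  define UB where "UB = (1/2) powr (-q) / (1-q) + (1/2) powr (-q) * (1/2) powr (-q) / \<beta>
       + (1/2) powr (-\<beta>) * (1/8) powr (-q) * ((1/2) powr (1-q) / (1-q))"
  have e1: "KB1 * (v powr (1-q)/(1-q)) = v powr (-\<beta>) * ((1/2) powr (-q) / (1-q))"
  proof -
    have "(v powr (\<alpha>-1)) powr (-q) * v powr (1-q) = v powr ((\<alpha>-1)*(-q) + (1-q))"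
      by (simp add: powr_powr powr_add[symmetric])
    also have "(\<alpha>-1)*(-q) + (1-q) = 0" using q by (simp add: algebra_simps)
    finally have "(v powr (\<alpha>-1)) powr (-q) * v powr (1-q) = 1" using v by simp
    then show ?thesis unfolding KB1_def by (simp add: field_simps)
  qed
  have e2: "KB2 * (((2 * v) powr (-\<beta>) - (1/2) powr (-\<beta>))/\<beta>) \<le> v powr (-\<beta>) * ((1/2) powr (-q) * (1/2) powr (-q) / \<beta>)"
  proof -
    have "(2 * v) powr (-\<beta>) \<le> v powr (-\<beta>)" using negpow[of "-\<beta>" v "2 * v"] a v by simp
    then have "((2 * v) powr (-\<beta>) - (1/2) powr (-\<beta>))/\<beta> \<le> v powr (-\<beta>) / \<beta>"
      using a powr_ge_zero[of "1/2" "-\<beta>"] by (intro divide_right_mono) linarith+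
    then have "KB2 * (((2 * v) powr (-\<beta>) - (1/2) powr (-\<beta>))/\<beta>) \<le> KB2 * (v powr (-\<beta>) / \<beta>)"
      by (intro mult_left_mono) (auto simp: KB2_def)
    then show ?thesis by (simp add: KB2_def field_simps)
  qed
  have e3: "KB3 * ((1/2) powr (1-q)/(1-q)) \<le> v powr (-\<beta>) * ((1/2) powr (-\<beta>) * (1/8) powr (-q) * ((1/2) powr (1-q) / (1-q)))"
  proof -
    have "0 \<le> KB3 * ((1/2) powr (1-q)/(1-q))" using q by (simp add: KB3_def)
    from mult_left_mono[OF vb this] show ?thesis by (simp add: KB3_def algebra_simps)
  qed
  have upper: "integral {v..1} (FF \<alpha> \<beta> v) \<le> UB * v powr (-\<beta>) * (1 - v) powr (1 - 2/\<alpha>)"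
  proof -
    have b1: "integral {v..(2 * v)} (FF \<alpha> \<beta> v) \<le> v powr (-\<beta>) * ((1/2) powr (-q) / (1-q))"
      using conjunct2[OF U1] unfolding e1 .
    note b2 = order_trans[OF conjunct2[OF U2] e2]
    note b3 = order_trans[OF conjunct2[OF U3] e3]
    have "UB * v powr (-\<beta>) = v powr (-\<beta>) * ((1/2) powr (-q) / (1-q)) + v powr (-\<beta>) * ((1/2) powr (-q) * (1/2) powr (-q) / \<beta>)
       + v powr (-\<beta>) * ((1/2) powr (-\<beta>) * (1/8) powr (-q) * ((1/2) powr (1-q) / (1-q)))"
      unfolding UB_def by (simp add: algebra_simps)
    then have "integral {v..1} (FF \<alpha> \<beta> v) \<le> UB * v powr (-\<beta>)"
      using spl spl2 b1 b2 b3 by linarith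
    also have "\<dots> \<le> UB * v powr (-\<beta>) * (1 - v) powr (1 - 2/\<alpha>)"
    proof -
      have "0 \<le> UB" unfolding UB_def using q a by (intro add_nonneg_nonneg) auto
      then have "0 \<le> UB * v powr (-\<beta>)" by simp
      from mult_left_mono[OF X1 this] show ?thesis by simp
    qed
    finally show ?thesis .
  qed
  have IL: "((\<lambda>r. r powr (-\<beta>-1)) has_integral (v powr (-\<beta>) - 1 powr (-\<beta>))/\<beta>) {v..1}"
    using int_inv[of v 1 \<beta>] v a by simp
  have low0: "(v powr (-\<beta>) - 1 powr (-\<beta>))/\<beta> \<le> integral {v..1} (FF \<alpha> \<beta> v)"
  proof (rule cmp_lower[OF integ IL])
    fix r assume r: "r \<in> {v<..<1}"
    have r1: "v < r" "r < 1" "0 < r" using r v by auto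
    have "r powr (-\<beta>-1) = r powr (-\<beta>) * 1 * r powr (-1)" using powr_add[of r "-\<beta>" "-1"] by simp
    also have "\<dots> \<le> r powr (-\<beta>) * (1 - r powr \<alpha>) powr (-q) * (r powr \<alpha> - v powr \<alpha>) powr (-q)"
    proof (rule mult3_mono)
      show "1 \<le> (1 - r powr \<alpha>) powr (-q)"
        using negpow[of "-q" "1 - r powr \<alpha>" 1] Apos[of r] r1 q by simp
      have "(r powr \<alpha>) powr (-q) = r powr (-1)" using q by (simp add: powr_powr)
      moreover have "(r powr \<alpha>) powr (-q) \<le> (r powr \<alpha> - v powr \<alpha>) powr (-q)"
        using negpow[of "-q" "r powr \<alpha> - v powr \<alpha>" "r powr \<alpha>"] Bpos[of r] r1 q by simp
      ultimately show "r powr (-1) \<le> (r powr \<alpha> - v powr \<alpha>) powr (-q)" by simp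
    qed auto
    also have "\<dots> = FF \<alpha> \<beta> v r" unfolding FF_def using q by simp
    finally show "r powr (-\<beta>-1) \<le> FF \<alpha> \<beta> v r" .
  qed
  have lower: "(1 - (1/4) powr \<beta>) / (2*\<beta>) * v powr (-\<beta>) * (1 - v) powr (1 - 2/\<alpha>) \<le> integral {v..1} (FF \<alpha> \<beta> v)"
  proof -
    have X2: "(1 - v) powr (1 - 2/\<alpha>) \<le> 2"
    proof -
      have "(1 - v) powr (1 - 2/\<alpha>) \<le> (1 - v) powr (-1)"
        using powr_mono'[of "-1" "1 - 2/\<alpha>" "1 - v"] a v by (simp add: field_simps)
      also have "\<dots> = 1 / (1 - v)" using v by (simp add: powr_minus_divide)
      also have "\<dots> \<le> 2" using v by (simp add: field_simps)
      finally show ?thesis .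
    qed
    have p1: "(1/4) powr \<beta> < 1" using powr_less_mono2[of \<beta> "1/4" 1] a by simp
    have p2: "1 \<le> (1/4) powr \<beta> * v powr (-\<beta>)"
    proof -
      have "(1/4) powr (-\<beta>) \<le> v powr (-\<beta>)" using negpow[of "-\<beta>" v "1/4"] a v by simp
      then have "(1/4) powr \<beta> * (1/4) powr (-\<beta>) \<le> (1/4) powr \<beta> * v powr (-\<beta>)"
        by (intro mult_left_mono) auto
      moreover have "(1/4) powr \<beta> * (1/4) powr (-\<beta>) = 1" by (simp add: powr_add[symmetric])
      ultimately show ?thesis by simp
    qed
    have "(1 - (1/4) powr \<beta>) / (2*\<beta>) * v powr (-\<beta>) * (1 - v) powr (1 - 2/\<alpha>)
        \<le> (1 - (1/4) powr \<beta>) / (2*\<beta>) * v powr (-\<beta>) * 2"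
      using X2 p1 a by (intro mult_left_mono) auto
    also have "\<dots> = (v powr (-\<beta>) - (1/4) powr \<beta> * v powr (-\<beta>)) / \<beta>" using a by (simp add: field_simps)
    also have "\<dots> \<le> (v powr (-\<beta>) - 1) / \<beta>" using p2 a by (intro divide_right_mono) auto
    also have "\<dots> = (v powr (-\<beta>) - 1 powr (-\<beta>))/\<beta>" by simp
    finally show ?thesis using low0 by linarith
  qed
  show ?thesis using integ lower upper unfolding UB_def by blast
qed

theorem lemma4p4:
  fixes \<alpha> \<beta> :: real
  assumes "1 < \<alpha>" "\<alpha> < 2" "0 < \<beta>"
  shows "\<exists>c::real. c \<ge> 1 \<and> (\<forall>v::real. 0 < v \<and> v < 1 \<longrightarrow>
     (\<lambda>r. r powr (-\<beta>) * (1 - r powr \<alpha>) powr (-1/\<alpha>) * (r powr \<alpha> - v powr \<alpha>) powr (-1/\<alpha>))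
        integrable_on {v..1} \<and>
     (1/c) * v powr (-\<beta>) * (1 - v) powr (1 - 2/\<alpha>)
       \<le> integral {v..1} (\<lambda>r. r powr (-\<beta>) * (1 - r powr \<alpha>) powr (-1/\<alpha>) * (r powr \<alpha> - v powr \<alpha>) powr (-1/\<alpha>)) \<and>
     integral {v..1} (\<lambda>r. r powr (-\<beta>) * (1 - r powr \<alpha>) powr (-1/\<alpha>) * (r powr \<alpha> - v powr \<alpha>) powr (-1/\<alpha>))
       \<le> c * v powr (-\<beta>) * (1 - v) powr (1 - 2/\<alpha>))"
proof -
  define q where "q = 1/\<alpha>"
  have q: "0 < q" "q < 1" using assms by (auto simp: q_def field_simps)
  define LA where "LA = 2 powr (-q) * 2 powr (-q) / (1-q) * (1/4) powr \<beta>"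
  define UA where "UA = 2 * (1/4) powr (-\<beta>) * (1/4) powr (-q) * (1/2) powr (1-2*q) / (1-q)"
  define LB where "LB = (1 - (1/4) powr \<beta>) / (2*\<beta>)"
  define UB where "UB = (1/2) powr (-q) / (1-q) + (1/2) powr (-q) * (1/2) powr (-q) / \<beta>
       + (1/2) powr (-\<beta>) * (1/8) powr (-q) * ((1/2) powr (1-q) / (1-q))"
  have LA0: "0 < LA" unfolding LA_def using q by simp
  have LB0: "0 < LB" unfolding LB_def using powr_less_mono2[of \<beta> "1/4" 1] assms by simp
  define c where "c = max 1 (max UA (max UB (max (1/LA) (1/LB))))"
  have c1: "c \<ge> 1" "UA \<le> c" "UB \<le> c" "1/LA \<le> c" "1/LB \<le> c" unfolding c_def by auto
  have cLA: "1/c \<le> LA" using c1 LA0 by (simp add: field_simps)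
  have cLB: "1/c \<le> LB" using c1 LB0 by (simp add: field_simps)
  have main: "FF \<alpha> \<beta> v integrable_on {v..1} \<and> (1/c) * v powr (-\<beta>) * (1 - v) powr (1 - 2/\<alpha>) \<le> integral {v..1} (FF \<alpha> \<beta> v)
      \<and> integral {v..1} (FF \<alpha> \<beta> v) \<le> c * v powr (-\<beta>) * (1 - v) powr (1 - 2/\<alpha>)" if v: "0 < v" "v < 1" for v
  proof -
    have P: "0 \<le> v powr (-\<beta>) * (1 - v) powr (1 - 2/\<alpha>)" by simp
    show ?thesis
    proof (cases "1/4 \<le> v")
      case True
      from caseA[OF assms True v(2)] have h: "FF \<alpha> \<beta> v integrable_on {v..1}"
        "LA * v powr (-\<beta>) * (1 - v) powr (1 - 2/\<alpha>) \<le> integral {v..1} (FF \<alpha> \<beta> v)"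
        "integral {v..1} (FF \<alpha> \<beta> v) \<le> UA * v powr (-\<beta>) * (1 - v) powr (1 - 2/\<alpha>)"
        unfolding LA_def UA_def q_def by auto
      have "(1/c) * (v powr (-\<beta>) * (1 - v) powr (1 - 2/\<alpha>)) \<le> LA * (v powr (-\<beta>) * (1 - v) powr (1 - 2/\<alpha>))"
        using mult_right_mono[OF cLA P] .
      moreover have "UA * (v powr (-\<beta>) * (1 - v) powr (1 - 2/\<alpha>)) \<le> c * (v powr (-\<beta>) * (1 - v) powr (1 - 2/\<alpha>))"
        using mult_right_mono[OF c1(2) P] .
      ultimately show ?thesis using h by (simp add: mult.assoc)
    next
      case False
      then have v4: "v < 1/4" by simp
      from caseB[OF assms v(1) v4] have h: "FF \<alpha> \<beta> v integrable_on {v..1}"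
        "LB * v powr (-\<beta>) * (1 - v) powr (1 - 2/\<alpha>) \<le> integral {v..1} (FF \<alpha> \<beta> v)"
        "integral {v..1} (FF \<alpha> \<beta> v) \<le> UB * v powr (-\<beta>) * (1 - v) powr (1 - 2/\<alpha>)"
        unfolding LB_def UB_def q_def by auto
      have "(1/c) * (v powr (-\<beta>) * (1 - v) powr (1 - 2/\<alpha>)) \<le> LB * (v powr (-\<beta>) * (1 - v) powr (1 - 2/\<alpha>))"
        using mult_right_mono[OF cLB P] .
      moreover have "UB * (v powr (-\<beta>) * (1 - v) powr (1 - 2/\<alpha>)) \<le> c * (v powr (-\<beta>) * (1 - v) powr (1 - 2/\<alpha>))"
        using mult_right_mono[OF c1(3) P] .
      ultimately show ?thesis using h by (simp add: mult.assoc)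
    qed
  qed
  show ?thesis
    apply (rule exI[of _ c])
    using c1(1) main unfolding FF_def by blast
qed

end
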